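(* Let $N, W, M$ be positive integers, $L=1$, and $\mathbf{w}\in\mathbb{C}^W$ a window such that (i) $\mathbf{w}$ is non-vanishing ($w[n]\neq0$ for $0\le n\le W-1$); (ii) $2\le W\le \frac{N}{2}$; (iii) $4\le M\le N$. Then for almost all non-vanishing $\mathbf{x}_0\in\mathbb{C}^N$ (all $\mathbf{x}_0$ with every entry nonzero, except a Lebesgue-null set), the only $N\times N$ Hermitian positive semidefinite matrix $\mathbf{X}$ satisfying $$\operatorname{trace}(\mathbf{W}_r^\star\mathbf{f}_m\mathbf{f}_m^\star\mathbf{W}_r\mathbf{X})=Z_w[m,r]\quad\text{for all }1\le m\le M,\ 0\le r\le R-1$$ is $\mathbf{X}_0=\mathbf{x}_0\mathbf{x}_0^\star$. In particular, the semidefinite program minimizing $\operatorname{trace}(\mathbf{X})$ subject to these constraints and $\mathbf{X}\succeq0$ has the unique feasible (hence optimal) point $\mathbf{x}_0\mathbf{x}_0^\star$.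
   Context: The window is extended by $w[k]=0$ for $k\notin\{0,\dots,W-1\}$; with $L=1$, $R=\lceil (N+W-1)/L\rceil=N+W-1$. For $0\le r\le R-1$, $\mathbf{W}_r$ is the $N\times N$ diagonal matrix with diagonal entries $w[rL-n]$, $n=0,\dots,N-1$. For integer $m$, $\mathbf{f}_m\in\mathbb{C}^N$ has entries $f_m[n]=e^{i2\pi mn/N}$ (indices modulo $N$), and $\star$ denotes conjugate transpose. The measurements are the STFT magnitudes of $\mathbf{x}_0$: $Z_w[m,r]=|\mathbf{f}_m^\star\mathbf{W}_r\mathbf{x}_0|^2=\big|\sum_{n=0}^{N-1}x_0[n]w[rL-n]e^{-i2\pi mn/N}\big|^2$. *)

theory Defs
  imports "HOL-Analysis.Analysis"
begin

text \<open>Conventions: vectors in C^N are functions nat => complex (only indices < N matter);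
  N x N matrices are functions nat => nat => complex (only indices < N matter).
  Hop size L = 1, so R = N + W - 1.\<close>

definition wext :: "nat \<Rightarrow> (nat \<Rightarrow> complex) \<Rightarrow> int \<Rightarrow> complex" where
  "wext W w k = (if 0 \<le> k \<and> k < int W then w (nat k) else 0)"

definition Wmat :: "nat \<Rightarrow> (nat \<Rightarrow> complex) \<Rightarrow> nat \<Rightarrow> nat \<Rightarrow> nat \<Rightarrow> complex" where
  "Wmat W w r i j = (if i = j then wext W w (int r - int i) else 0)"

definition fcol :: "nat \<Rightarrow> int \<Rightarrow> nat \<Rightarrow> nat \<Rightarrow> complex" where
  "fcol N m n j = (if j = 0 then exp (\<i> * 2 * pi * of_int m * of_nat n / of_nat N) else 0)"

definition mmul :: "nat \<Rightarrow> (nat \<Rightarrow> nat \<Rightarrow> complex) \<Rightarrow> (nat \<Rightarrow> nat \<Rightarrow> complex) \<Rightarrow> nat \<Rightarrow> nat \<Rightarrow> complex" where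
  "mmul K A B i j = (\<Sum>k<K. A i k * B k j)"

definition adj :: "(nat \<Rightarrow> nat \<Rightarrow> complex) \<Rightarrow> nat \<Rightarrow> nat \<Rightarrow> complex" where
  "adj A i j = cnj (A j i)"

definition mtrace :: "nat \<Rightarrow> (nat \<Rightarrow> nat \<Rightarrow> complex) \<Rightarrow> complex" where
  "mtrace N A = (\<Sum>i<N. A i i)"

definition hermitian_psd :: "nat \<Rightarrow> (nat \<Rightarrow> nat \<Rightarrow> complex) \<Rightarrow> bool" where
  "hermitian_psd N X \<longleftrightarrow>
     (\<forall>i<N. \<forall>j<N. X i j = cnj (X j i)) \<and>
     (\<forall>v :: nat \<Rightarrow> complex. 0 \<le> Re (\<Sum>i<N. \<Sum>j<N. cnj (v i) * X i j * v j))"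

text \<open>trace(W_r^* f_m f_m^* W_r X) for N x N matrix X (the product f_m f_m^* has inner dimension 1).\<close>
definition meas_op :: "nat \<Rightarrow> nat \<Rightarrow> (nat \<Rightarrow> complex) \<Rightarrow> int \<Rightarrow> nat \<Rightarrow> (nat \<Rightarrow> nat \<Rightarrow> complex) \<Rightarrow> complex" where
  "meas_op N W w m r X =
     mtrace N (mmul N (mmul N (mmul 1 (mmul N (adj (Wmat W w r)) (fcol N m)) (adj (fcol N m))) (Wmat W w r)) X)"

definition Zw :: "nat \<Rightarrow> nat \<Rightarrow> (nat \<Rightarrow> complex) \<Rightarrow> (nat \<Rightarrow> complex) \<Rightarrow> int \<Rightarrow> nat \<Rightarrow> real" where
  "Zw N W w x0 m r =
     (cmod (\<Sum>n<N. x0 n * wext W w (int r - int n) * exp (- \<i> * 2 * pi * of_int m * of_nat n / of_nat N)))\<^sup>2"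

end

theory Submission
  imports Defs
begin



definition uu :: "nat \<Rightarrow> nat \<Rightarrow> (nat \<Rightarrow> complex) \<Rightarrow> int \<Rightarrow> nat \<Rightarrow> nat \<Rightarrow> complex" where
  "uu N W w m r j = wext W w (int r - int j) * exp (- \<i> * 2 * pi * of_int m * of_nat j / of_nat N)"

lemma cnj_fcol: "cnj (fcol N m n 0) = exp (- \<i> * 2 * pi * of_int m * of_nat n / of_nat N)"
  by (simp add: fcol_def exp_cnj)

lemma sum_delta_lt: "i < (N::nat) \<Longrightarrow> (\<Sum>k<N. (if k = i then f k else 0)) = (f i :: 'a::comm_monoid_add)"
  by (subst sum.delta) auto

lemma Wmat_mult_r: "(A :: complex) * Wmat W w r l k = (if l = k then A * wext W w (int r - int k) else 0)"
  by (simp add: Wmat_def)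
lemma Wmat_mult_l: "cnj (Wmat W w r l i) * (A :: complex) = (if l = i then cnj (wext W w (int r - int i)) * A else 0)"
  by (simp add: Wmat_def)

lemma meas_closed:
  "meas_op N W w m r X = (\<Sum>i<N. \<Sum>j<N. cnj (uu N W w m r i) * uu N W w m r j * X j i)"
proof -
  have C: "mmul N (adj (Wmat W w r)) (fcol N m) i 0 = cnj (wext W w (int r - int i)) * fcol N m i 0"
    if "i < N" for i
    using that by (simp add: mmul_def adj_def Wmat_mult_l sum_delta_lt)
  have B: "mmul 1 (mmul N (adj (Wmat W w r)) (fcol N m)) (adj (fcol N m)) i l
        = cnj (wext W w (int r - int i)) * fcol N m i 0 * cnj (fcol N m l 0)" if "i < N" for i l
    using that C by (simp add: mmul_def adj_def)
  have A: "mmul N (mmul 1 (mmul N (adj (Wmat W w r)) (fcol N m)) (adj (fcol N m))) (Wmat W w r) i k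
     = cnj (uu N W w m r i) * uu N W w m r k" if "i < N" "k < N" for i k
  proof -
    have "mmul N (mmul 1 (mmul N (adj (Wmat W w r)) (fcol N m)) (adj (fcol N m))) (Wmat W w r) i k
      = (\<Sum>l<N. (cnj (wext W w (int r - int i)) * fcol N m i 0 * cnj (fcol N m l 0)) * Wmat W w r l k)"
      unfolding mmul_def[of N _ "Wmat W w r"] using B that by simp
    also have "\<dots> = cnj (wext W w (int r - int i)) * fcol N m i 0 * cnj (fcol N m k 0) * wext W w (int r - int k)"
      using that by (simp only: Wmat_mult_r sum_delta_lt)
    also have "\<dots> = cnj (uu N W w m r i) * uu N W w m r k"
      by (simp add: uu_def fcol_def exp_cnj)
    finally show ?thesis .
  qed
  show ?thesis unfolding meas_op_def mtrace_def mmul_def[of N _ X]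
    using A by (simp add: mmul_def)
qed



lemma AE_PiM_coord:
  fixes P :: "(nat \<Rightarrow> complex) \<Rightarrow> bool" and I :: "nat set"
  assumes fin: "finite I" and j: "j \<in> I"
   and meas: "{x \<in> space (PiM I (\<lambda>_. lborel)). \<not> P x} \<in> sets (PiM I (\<lambda>_. lborel :: complex measure))"
   and ae: "\<And>x. AE z in lborel. P (x(j := z))"
  shows "AE x in PiM I (\<lambda>_. lborel). P x"
proof -
  interpret product_sigma_finite "\<lambda>_::nat. lborel :: complex measure"
    by (simp add: product_sigma_finite_def sigma_finite_lborel)
  define B where "B = {x \<in> space (PiM I (\<lambda>_. lborel)). \<not> P x}"
  have IJ: "I = insert j (I - {j})" using j by auto
  have "emeasure (PiM I (\<lambda>_. lborel)) B = (\<integral>\<^sup>+x. indicator B x \<partial>PiM I (\<lambda>_. lborel))"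
    using meas B_def by simp
  also have "\<dots> = (\<integral>\<^sup>+ x. (\<integral>\<^sup>+ z. indicator B (x(j := z)) \<partial>lborel) \<partial>PiM (I - {j}) (\<lambda>_. lborel))"
    apply (subst IJ)
    apply (rule product_nn_integral_insert)
    using fin meas B_def IJ[symmetric] by auto
  also have "\<dots> = (\<integral>\<^sup>+ x. 0 \<partial>PiM (I - {j}) (\<lambda>_. lborel))"
  proof -
    have inner: "(\<integral>\<^sup>+ z. indicator B (x(j := z)) \<partial>lborel) = 0" for x
    proof (subst nn_integral_cong_AE[where v="\<lambda>_. 0"])
      show "AE z in lborel. indicator B (x(j := z)) = (0::ennreal)"
        using ae[of x] by eventually_elim (auto simp: B_def)
    qed simp
    show ?thesis by (simp add: inner)
  qed
  finally have "emeasure (PiM I (\<lambda>_. lborel)) B = 0" by simp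
  then show ?thesis
    using AE_iff_measurable[OF meas[folded B_def] B_def[symmetric]] by simp
qed

lemma sphere_null: "sphere (c::complex) r \<in> null_sets lborel"
  using negligible_sphere[of c r]
  by (auto simp: null_sets_completion_iff negligible_iff_null_sets negligible_convex_frontier)

lemma Im_quad:
  "Im ((a*z+b) * cnj (c*z+d)) = Im (a * cnj c) * (Re z ^ 2 + Im z ^ 2)
     + (Im (a * cnj d) + Im (b * cnj c)) * Re z + (Re (a * cnj d) - Re (b * cnj c)) * Im z + Im (b * cnj d)"
  by (simp add: algebra_simps power2_eq_square)

lemma circle_AE:
  assumes K: "Im (a * cnj c) \<noteq> 0"
  shows "AE z in lborel. Im ((a*z+b) * cnj (c*z+d)) \<noteq> 0"
proof -
  define k where "k = Im (a * cnj c)"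
  define g1 where "g1 = Im (a * cnj d) + Im (b * cnj c)"
  define g2 where "g2 = Re (a * cnj d) - Re (b * cnj c)"
  define q where "q = Im (b * cnj d)"
  define ctr where "ctr = Complex (- g1 / (2*k)) (- g2 / (2*k))"
  define R where "R = (g1^2 + g2^2) / (4*k^2) - q / k"
  have "{z \<in> space lborel. \<not> Im ((a*z+b) * cnj (c*z+d)) \<noteq> 0} \<subseteq> sphere ctr (sqrt R)"
  proof (intro subsetI)
    fix z assume "z \<in> {z \<in> space lborel. \<not> Im ((a*z+b) * cnj (c*z+d)) \<noteq> 0}"
    then have "Im ((a*z+b) * cnj (c*z+d)) = 0" by simp
    then have e: "k * (Re z ^ 2 + Im z ^ 2) + g1 * Re z + g2 * Im z + q = 0"
      unfolding Im_quad k_def g1_def g2_def q_def by simp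
    have kk: "k \<noteq> 0" using K k_def by simp
    have "(Re z + g1/(2*k))^2 + (Im z + g2/(2*k))^2 = R"
    proof -
      have "(Re z + g1/(2*k))^2 + (Im z + g2/(2*k))^2 - R
         = (k * (Re z ^ 2 + Im z ^ 2) + g1 * Re z + g2 * Im z + q) / k"
        using kk by (simp add: R_def field_simps power2_eq_square)
      then show ?thesis using e by simp
    qed
    moreover have "dist ctr z = sqrt ((Re z + g1/(2*k))^2 + (Im z + g2/(2*k))^2)"
      by (simp add: dist_norm ctr_def cmod_def power2_eq_square algebra_simps)
    ultimately show "z \<in> sphere ctr (sqrt R)" by simp
  qed
  then show ?thesis by (rule AE_I'[OF sphere_null])
qed




lemma Zw_closed:
  "complex_of_real (Zw N W w x0 m r) = (\<Sum>n<N. x0 n * uu N W w m r n) * cnj (\<Sum>n<N. x0 n * uu N W w m r n)"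
  unfolding Zw_def uu_def by (simp only: mult.assoc complex_norm_square)

lemma uu_zero: "r < j \<Longrightarrow> uu N W w m r j = 0"
  by (simp add: uu_def wext_def)

lemma cnj_exp_mult: "Re z = 0 \<Longrightarrow> cnj (exp z) * exp z = 1"
proof -
  assume "Re z = 0"
  then have "cnj z + z = 0" by (simp add: complex_eq_iff)
  then show ?thesis by (simp add: exp_cnj exp_add[symmetric])
qed

lemma uu_rr: "0 < W \<Longrightarrow> cnj (uu N W w m r r) * uu N W w m r r = cnj (w 0) * w 0"
proof -
  assume "0 < W"
  have "cnj (uu N W w m r r) * uu N W w m r r = cnj (w 0) * w 0 *
     (cnj (exp (- \<i> * 2 * pi * of_int m * of_nat r / of_nat N)) * exp (- \<i> * 2 * pi * of_int m * of_nat r / of_nat N))"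
    using \<open>0 < W\<close> by (simp add: uu_def wext_def)
  also have "\<dots> = cnj (w 0) * w 0" by (subst cnj_exp_mult) simp_all
  finally show ?thesis .
qed

lemma uu_rr_nz: "0 < W \<Longrightarrow> w 0 \<noteq> 0 \<Longrightarrow> uu N W w m r r \<noteq> 0"
  by (simp add: uu_def wext_def)

lemma dsum_split:
  fixes F :: "nat \<Rightarrow> nat \<Rightarrow> complex"
  assumes "r < N" and Z: "\<And>i j. i < N \<Longrightarrow> j < N \<Longrightarrow> r < i \<or> r < j \<Longrightarrow> F i j = 0"
  shows "(\<Sum>i<N. \<Sum>j<N. F i j) = (\<Sum>i<r. \<Sum>j<r. F i j) + (\<Sum>i<r. F i r) + (\<Sum>j<r. F r j) + F r r"
proof -
  have sub: "{..<Suc r} \<subseteq> {..<N}" using assms by auto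
  have inner: "(\<Sum>j<N. F i j) = (\<Sum>j<Suc r. F i j)" if "i < N" for i
    using sum.mono_neutral_left[of "{..<N}" "{..<Suc r}" "\<lambda>j. F i j"] sub Z that by force
  have "(\<Sum>i<N. \<Sum>j<N. F i j) = (\<Sum>i<N. \<Sum>j<Suc r. F i j)"
    by (rule sum.cong) (auto simp: inner)
  also have "\<dots> = (\<Sum>i<Suc r. \<Sum>j<Suc r. F i j)"
    using sum.mono_neutral_left[of "{..<N}" "{..<Suc r}" "\<lambda>i. \<Sum>j<Suc r. F i j"] sub Z by force
  also have "\<dots> = (\<Sum>i<r. \<Sum>j<r. F i j) + (\<Sum>i<r. F i r) + (\<Sum>j<r. F r j) + F r r"
    by (simp add: sum.distrib algebra_simps)
  finally show ?thesis .
qed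

lemma real_lin:
  assumes "Re (a * d) = 0" "Re (b * d) = 0" "Im (a * cnj b) \<noteq> 0"
  shows "d = (0::complex)"
proof -
  have e1: "Re a * Re d - Im a * Im d = 0" and e2: "Re b * Re d - Im b * Im d = 0"
    using assms by auto
  have D: "Im a * Re b - Re a * Im b \<noteq> 0" using assms(3) by simp
  have "(Im a * Re b - Re a * Im b) * Re d = Im a * (Re b * Re d - Im b * Im d) - Im b * (Re a * Re d - Im a * Im d)"
    by (simp add: algebra_simps)
  then have "(Im a * Re b - Re a * Im b) * Re d = 0" using e1 e2 by simp
  moreover have "(Im a * Re b - Re a * Im b) * Im d = Re a * (Re b * Re d - Im b * Im d) - Re b * (Re a * Re d - Im a * Im d)"
    by (simp add: algebra_simps)
  then have "(Im a * Re b - Re a * Im b) * Im d = 0" using e1 e2 by simp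
  ultimately show ?thesis using D by (simp add: complex_eq_iff)
qed




lemma sum3:
  fixes f :: "nat \<Rightarrow> 'a::comm_monoid_add"
  assumes "a < N" "b < N" "c < N" "a \<noteq> b" "a \<noteq> c" "b \<noteq> c"
    and Z: "\<And>k. k < N \<Longrightarrow> k \<noteq> a \<Longrightarrow> k \<noteq> b \<Longrightarrow> k \<noteq> c \<Longrightarrow> f k = 0"
  shows "(\<Sum>k<N. f k) = f a + f b + f c"
proof -
  have "(\<Sum>k<N. f k) = (\<Sum>k\<in>{a,b,c}. f k)"
    using sum.mono_neutral_left[of "{..<N}" "{a,b,c}" f] assms by force
  also have "\<dots> = f a + f b + f c" using assms by (simp add: add.assoc)
  finally show ?thesis .
qed

lemma psd_col:
  assumes H: "hermitian_psd N X" and r: "r < N" and i: "0 < i" "i < r"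
    and IH: "\<And>a b. a < r \<Longrightarrow> b < r \<Longrightarrow> X a b = x a * cnj (x b)"
  shows "x i * X 0 r = x 0 * X i r"
proof -
  have herm: "\<And>a b. a < N \<Longrightarrow> b < N \<Longrightarrow> X a b = cnj (X b a)"
    using H unfolding hermitian_psd_def by blast
  define p where "p = x i * X 0 r - x 0 * X i r"
  define l where "l = 1 / (\<bar>Re (X r r)\<bar> + 1)"
  define t where "t = - complex_of_real l * cnj p"
  define v where "v = (\<lambda>k. if k = 0 then cnj (x i) else if k = i then - cnj (x 0) else if k = r then t else 0)"
  define G where "G = (\<lambda>a. cnj (v a) * X a 0 * v 0 + cnj (v a) * X a i * v i + cnj (v a) * X a r * v r)"
  have inner: "(\<Sum>b<N. cnj (v a) * X a b * v b) = G a" for a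
    unfolding G_def
    by (rule sum3[of 0 N i r "\<lambda>b. cnj (v a) * X a b * v b"]) (use i r in \<open>simp_all add: v_def\<close>)
  have outer: "(\<Sum>a<N. G a) = G 0 + G i + G r"
    by (rule sum3[of 0 N i r G]) (use i r in \<open>simp_all add: v_def G_def\<close>)
  have X0i: "X 0 i = x 0 * cnj (x i)" "X i 0 = x i * cnj (x 0)" "X 0 0 = x 0 * cnj (x 0)" "X i i = x i * cnj (x i)"
    using IH[of 0 i] IH[of i 0] IH[of 0 0] IH[of i i] i by auto
  have Xr: "X r 0 = cnj (X 0 r)" "X r i = cnj (X i r)" using herm[of r 0] herm[of r i] i r by auto
  have vv: "v 0 = cnj (x i)" "v i = - cnj (x 0)" "v r = t" using i unfolding v_def by auto
  have Gs: "G 0 + G i + G r = t * p + cnj (t * p) + cnj t * t * X r r"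
  proof -
    have "G 0 + G i + G r = x i * (x 0 * cnj (x 0)) * cnj (x i) + x i * (x 0 * cnj (x i)) * (- cnj (x 0)) + x i * X 0 r * t
      + (- x 0) * (x i * cnj (x 0)) * cnj (x i) + (- x 0) * (x i * cnj (x i)) * (- cnj (x 0)) + (- x 0) * X i r * t
      + cnj t * cnj (X 0 r) * cnj (x i) + cnj t * cnj (X i r) * (- cnj (x 0)) + cnj t * X r r * t"
      unfolding G_def vv X0i Xr by simp
    also have "\<dots> = t * p + cnj (t * p) + cnj t * t * X r r"
      unfolding p_def by (simp add: algebra_simps)
    finally show ?thesis .
  qed
  have tot: "(\<Sum>a<N. \<Sum>b<N. cnj (v a) * X a b * v b) = t * p + cnj (t * p) + cnj t * t * X r r"
    unfolding inner outer Gs ..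
  define n where "n = (cmod p)^2"
  have pn: "p * cnj p = of_real n" unfolding n_def by (rule complex_norm_square[symmetric])
  have tot2: "t * p + cnj (t * p) + cnj t * t * X r r = of_real (l^2 * n) * X r r - of_real (2 * l * n)"
  proof -
    have "t * p = - of_real (l * n)" unfolding t_def using pn by (simp add: algebra_simps)
    moreover have "cnj t * t = of_real (l^2 * n)" unfolding t_def using pn
      by (simp add: algebra_simps power2_eq_square)
    ultimately show ?thesis by simp
  qed
  have "0 \<le> Re (\<Sum>a<N. \<Sum>b<N. cnj (v a) * X a b * v b)"
    using H unfolding hermitian_psd_def by blast
  moreover have "Re (\<Sum>a<N. \<Sum>b<N. cnj (v a) * X a b * v b) = l^2 * n * Re (X r r) - 2 * l * n"
    unfolding tot tot2 by (simp del: of_real_mult of_real_power)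
  ultimately have ge: "0 \<le> l^2 * n * Re (X r r) - 2 * l * n" by simp
  have lpos: "0 < l" unfolding l_def by (simp add: add_pos_nonneg)
  have lt: "l * Re (X r r) < 1"
  proof -
    have "l * Re (X r r) \<le> l * \<bar>Re (X r r)\<bar>" using lpos by (intro mult_left_mono) auto
    also have "\<dots> < 1" unfolding l_def by (simp add: field_simps)
    finally show ?thesis .
  qed
  have n0: "0 \<le> n" unfolding n_def by simp
  have "l * n * (l * Re (X r r) - 2) \<ge> 0" using ge by (simp add: algebra_simps power2_eq_square)
  moreover have "l * Re (X r r) - 2 < 0" using lt by simp
  ultimately have "l * n \<le> 0" by (simp add: mult_le_0_iff zero_le_mult_iff)
  then have "n = 0" using lpos n0 by (simp add: mult_le_0_iff)
  then have "p = 0" unfolding n_def by simp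
  then show ?thesis unfolding p_def by simp
qed




definition hh :: "nat \<Rightarrow> nat \<Rightarrow> (nat \<Rightarrow> complex) \<Rightarrow> (nat \<Rightarrow> complex) \<Rightarrow> int \<Rightarrow> nat \<Rightarrow> complex" where
  "hh N W w x m r = cnj (uu N W w m r r) * (\<Sum>j<r. uu N W w m r j * x j)"

lemma sum_upto_r:
  assumes "r < (N::nat)" "\<And>j. r < j \<Longrightarrow> f j = 0"
  shows "(\<Sum>j<N. f j) = (\<Sum>j<r. f j) + (f r :: complex)"
proof -
  have "(\<Sum>j<N. f j) = (\<Sum>j<Suc r. f j)"
    using sum.mono_neutral_left[of "{..<N}" "{..<Suc r}" f] assms by force
  then show ?thesis by simp
qed

lemma step_eq:
  assumes H: "hermitian_psd N X" and r: "r < N" and W: "0 < W"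
    and IH: "\<And>a b. a < r \<Longrightarrow> b < r \<Longrightarrow> X a b = x a * cnj (x b)"
    and col: "\<And>a. a < r \<Longrightarrow> X a r = c * x a"
    and meas: "meas_op N W w m r X = complex_of_real (Zw N W w x m r)"
  shows "hh N W w x m r * (c - cnj (x r)) + cnj (hh N W w x m r * (c - cnj (x r)))
          + cnj (w 0) * w 0 * (X r r - x r * cnj (x r)) = 0"
proof -
  define u where "u = uu N W w m r"
  have herm: "\<And>a b. a < N \<Longrightarrow> b < N \<Longrightarrow> X a b = cnj (X b a)"
    using H unfolding hermitian_psd_def by blast
  have uz: "\<And>j. r < j \<Longrightarrow> u j = 0" unfolding u_def by (rule uu_zero)
  define P where "P = (\<Sum>j<r. u j * x j)"
  have cP: "cnj P = (\<Sum>i<r. cnj (u i) * cnj (x i))" unfolding P_def by simp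
  have L: "meas_op N W w m r X = (\<Sum>i<r. \<Sum>j<r. cnj (u i) * u j * X j i) + (\<Sum>i<r. cnj (u i) * u r * X r i)
      + (\<Sum>j<r. cnj (u r) * u j * X j r) + cnj (u r) * u r * X r r"
    unfolding meas_closed u_def[symmetric]
    by (rule dsum_split[OF r]) (auto simp: uz)
  have S1: "(\<Sum>i<r. \<Sum>j<r. cnj (u i) * u j * X j i) = cnj P * P"
  proof -
    have "(\<Sum>i<r. \<Sum>j<r. cnj (u i) * u j * X j i) = (\<Sum>i<r. \<Sum>j<r. (cnj (u i) * cnj (x i)) * (u j * x j))"
      by (intro sum.cong refl) (simp add: IH mult_ac)
    also have "\<dots> = cnj P * P" unfolding cP P_def by (simp add: sum_product)
    finally show ?thesis .
  qed
  have S2: "(\<Sum>i<r. cnj (u i) * u r * X r i) = u r * cnj c * cnj P"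
  proof -
    have "(\<Sum>i<r. cnj (u i) * u r * X r i) = (\<Sum>i<r. (u r * cnj c) * (cnj (u i) * cnj (x i)))"
    proof (intro sum.cong refl)
      fix i assume "i \<in> {..<r}"
      then have "X r i = cnj c * cnj (x i)" using herm[of r i] col[of i] r by auto
      then show "cnj (u i) * u r * X r i = (u r * cnj c) * (cnj (u i) * cnj (x i))" by (simp add: mult_ac)
    qed
    also have "\<dots> = u r * cnj c * cnj P" unfolding cP by (simp add: sum_distrib_left)
    finally show ?thesis .
  qed
  have S3: "(\<Sum>j<r. cnj (u r) * u j * X j r) = cnj (u r) * c * P"
  proof -
    have "(\<Sum>j<r. cnj (u r) * u j * X j r) = (\<Sum>j<r. (cnj (u r) * c) * (u j * x j))"
      by (intro sum.cong refl) (simp add: col mult_ac)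
    also have "\<dots> = cnj (u r) * c * P" unfolding P_def by (simp add: sum_distrib_left)
    finally show ?thesis .
  qed
  have R: "(\<Sum>n<N. x n * uu N W w m r n) = P + u r * x r"
    unfolding u_def[symmetric] P_def
    by (subst sum_upto_r[OF r]) (auto simp: uz mult.commute)
  have eq: "cnj P * P + u r * cnj c * cnj P + cnj (u r) * c * P + cnj (u r) * u r * X r r
      = (P + u r * x r) * cnj (P + u r * x r)"
    using meas unfolding L S1 S2 S3 Zw_closed R .
  have K: "cnj (u r) * u r = cnj (w 0) * w 0" unfolding u_def by (rule uu_rr[OF W])
  have hh: "hh N W w x m r = cnj (u r) * P" unfolding hh_def u_def P_def ..
  have "hh N W w x m r * (c - cnj (x r)) + cnj (hh N W w x m r * (c - cnj (x r)))
          + cnj (u r) * u r * (X r r - x r * cnj (x r))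
       = (cnj P * P + u r * cnj c * cnj P + cnj (u r) * c * P + cnj (u r) * u r * X r r)
         - (P + u r * x r) * cnj (P + u r * x r)"
    unfolding hh by (simp add: algebra_simps)
  then show ?thesis using eq K by simp
qed




definition gen :: "nat \<Rightarrow> nat \<Rightarrow> (nat \<Rightarrow> complex) \<Rightarrow> (nat \<Rightarrow> complex) \<Rightarrow> nat \<Rightarrow> bool" where
  "gen N W w x r \<longleftrightarrow> Im ((hh N W w x 2 r - hh N W w x 1 r) * cnj (hh N W w x 3 r - hh N W w x 1 r)) \<noteq> 0"

lemma step_full:
  assumes H: "hermitian_psd N X" and r: "r < N" and W: "0 < W" and w0: "w 0 \<noteq> 0" and x0: "x 0 \<noteq> 0"
    and IH: "\<And>a b. a < r \<Longrightarrow> b < r \<Longrightarrow> X a b = x a * cnj (x b)"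
    and G: "0 < r \<Longrightarrow> gen N W w x r"
    and meas: "\<And>m. 1 \<le> m \<Longrightarrow> m \<le> 3 \<Longrightarrow> meas_op N W w m r X = complex_of_real (Zw N W w x m r)"
  shows "\<And>a b. a \<le> r \<Longrightarrow> b \<le> r \<Longrightarrow> X a b = x a * cnj (x b)"
proof -
  have herm: "\<And>a b. a < N \<Longrightarrow> b < N \<Longrightarrow> X a b = cnj (X b a)"
    using H unfolding hermitian_psd_def by blast
  obtain c where col: "\<And>a. a < r \<Longrightarrow> X a r = c * x a" and c0: "r = 0 \<Longrightarrow> c = cnj (x r)"
  proof (cases "r = 0")
    case True then show ?thesis using that by auto
  next
    case False
    show ?thesis
    proof (rule that)
      fix a assume a: "a < r"
      show "X a r = X 0 r / x 0 * x a"
      proof (cases "a = 0")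
        case True then show ?thesis using x0 by simp
      next
        case False
        then have "x a * X 0 r = x 0 * X a r" using psd_col[OF H r _ a IH] by auto
        then show ?thesis using x0 by (simp add: field_simps)
      qed
    qed (use False in auto)
  qed
  define d where "d = c - cnj (x r)"
  define e where "e = X r r - x r * cnj (x r)"
  define K where "K = cnj (w 0) * w 0"
  have E: "hh N W w x m r * d + cnj (hh N W w x m r * d) + K * e = 0" if "1 \<le> m" "m \<le> 3" for m
    unfolding d_def e_def K_def by (rule step_eq[OF H r W IH col meas[OF that]])
  have d0: "d = 0"
  proof (cases "r = 0")
    case True then show ?thesis using c0 d_def by simp
  next
    case False
    define h1 where "h1 = hh N W w x 1 r"
    define h2 where "h2 = hh N W w x 2 r"
    define h3 where "h3 = hh N W w x 3 r"
    have E1: "h1 * d + cnj (h1 * d) + K * e = 0" unfolding h1_def by (rule E) auto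
    have E2: "h2 * d + cnj (h2 * d) + K * e = 0" unfolding h2_def by (rule E) auto
    have E3: "h3 * d + cnj (h3 * d) + K * e = 0" unfolding h3_def by (rule E) auto
    have A: "(h2 - h1) * d + cnj ((h2 - h1) * d) = 0"
    proof -
      have "(h2 - h1) * d + cnj ((h2 - h1) * d) = (h2 * d + cnj (h2 * d) + K * e) - (h1 * d + cnj (h1 * d) + K * e)"
        by (simp add: algebra_simps)
      also have "\<dots> = 0 - 0" by (simp only: E1 E2)
      finally show ?thesis by simp
    qed
    have B: "(h3 - h1) * d + cnj ((h3 - h1) * d) = 0"
    proof -
      have "(h3 - h1) * d + cnj ((h3 - h1) * d) = (h3 * d + cnj (h3 * d) + K * e) - (h1 * d + cnj (h1 * d) + K * e)"
        by (simp add: algebra_simps)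
      also have "\<dots> = 0 - 0" by (simp only: E1 E3)
      finally show ?thesis by simp
    qed
    have re: "Re z = 0" if "z + cnj z = 0" for z :: complex
      using arg_cong[OF that, of Re] by simp
    show ?thesis
      by (rule real_lin[OF re[OF A] re[OF B]]) (use G False in \<open>simp add: gen_def h1_def h2_def h3_def\<close>)
  qed
  have "K * e = 0" using E[of 1] d0 by simp
  moreover have "K \<noteq> 0" using w0 K_def by simp
  ultimately have e0: "e = 0" by simp
  fix a b assume a: "a \<le> r" and b: "b \<le> r"
  show "X a b = x a * cnj (x b)"
  proof (cases "a < r")
    case ar: True
    show ?thesis
    proof (cases "b < r")
      case True then show ?thesis using IH ar by simp
    next
      case False then have "b = r" using b by simp
      then show ?thesis using col[OF ar] d0 d_def by (simp add: mult.commute)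
    qed
  next
    case False then have ar: "a = r" using a by simp
    show ?thesis
    proof (cases "b < r")
      case True
      then have "X r b = cnj (X b r)" using herm[of r b] r by simp
      then show ?thesis using col[OF True] d0 d_def ar by simp
    next
      case False then have "b = r" using b by simp
      then show ?thesis using e0 e_def ar by simp
    qed
  qed
qed

lemma pointwise:
  assumes H: "hermitian_psd N X" and W: "0 < W" and w0: "w 0 \<noteq> 0" and x0: "x 0 \<noteq> 0"
    and G: "\<And>r. 0 < r \<Longrightarrow> r < N \<Longrightarrow> gen N W w x r"
    and meas: "\<And>m r. 1 \<le> m \<Longrightarrow> m \<le> 3 \<Longrightarrow> r < N \<Longrightarrow> meas_op N W w m r X = complex_of_real (Zw N W w x m r)"
  shows "\<forall>i<N. \<forall>j<N. X i j = x i * cnj (x j)"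
proof -
  have "\<forall>a b. a \<le> r \<longrightarrow> b \<le> r \<longrightarrow> X a b = x a * cnj (x b)" if "r < N" for r
    using that
  proof (induction r)
    case 0
    have M: "\<And>m. 1 \<le> m \<Longrightarrow> m \<le> 3 \<Longrightarrow> meas_op N W w m 0 X = complex_of_real (Zw N W w x m 0)"
      using meas 0 by auto
    show ?case
    proof (intro allI impI)
      fix a b :: nat assume "a \<le> 0" "b \<le> 0"
      show "X a b = x a * cnj (x b)"
        by (rule step_full[OF H 0 W w0 x0 _ _ M]) (use \<open>a \<le> 0\<close> \<open>b \<le> 0\<close> in simp_all)
    qed
  next
    case (Suc r)
    then have IH: "\<And>a b. a < Suc r \<Longrightarrow> b < Suc r \<Longrightarrow> X a b = x a * cnj (x b)" by auto
    have M: "\<And>m. 1 \<le> m \<Longrightarrow> m \<le> 3 \<Longrightarrow> meas_op N W w m (Suc r) X = complex_of_real (Zw N W w x m (Suc r))"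
      using meas Suc.prems by auto
    have G': "0 < Suc r \<Longrightarrow> gen N W w x (Suc r)" using G Suc.prems by blast
    show ?case
    proof (intro allI impI)
      fix a b :: nat assume "a \<le> Suc r" "b \<le> Suc r"
      show "X a b = x a * cnj (x b)"
        by (rule step_full[OF H Suc.prems W w0 x0 IH G' M]) (use \<open>a \<le> Suc r\<close> \<open>b \<le> Suc r\<close> in simp_all)
    qed
  qed
  then have A: "\<And>r a b. r < N \<Longrightarrow> a \<le> r \<Longrightarrow> b \<le> r \<Longrightarrow> X a b = x a * cnj (x b)" by blast
  show ?thesis
  proof (intro allI impI)
    fix i j assume ij: "i < N" "j < N"
    show "X i j = x i * cnj (x j)" by (rule A[of "max i j"]) (use ij in auto)
  qed
qed




lemma conv_psd: "hermitian_psd N (\<lambda>i j. x i * cnj (x j))"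
  unfolding hermitian_psd_def
proof (intro conjI allI impI)
  fix v :: "nat \<Rightarrow> complex"
  define s where "s = (\<Sum>i<N. cnj (v i) * x i)"
  have "s * cnj s = (\<Sum>i<N. cnj (v i) * x i) * (\<Sum>j<N. v j * cnj (x j))"
    unfolding s_def by (simp add: mult_ac)
  also have "\<dots> = (\<Sum>i<N. \<Sum>j<N. cnj (v i) * (x i * cnj (x j)) * v j)"
    unfolding sum_product by (simp add: mult_ac)
  finally have "(\<Sum>i<N. \<Sum>j<N. cnj (v i) * (x i * cnj (x j)) * v j) = s * cnj s" ..
  also have "\<dots> = of_real ((cmod s)^2)" by (rule complex_norm_square[symmetric])
  finally show "0 \<le> Re (\<Sum>i<N. \<Sum>j<N. cnj (v i) * (x i * cnj (x j)) * v j)" by simp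
qed auto

lemma conv_meas: "meas_op N W w m r (\<lambda>i j. x i * cnj (x j)) = complex_of_real (Zw N W w x m r)"
proof -
  have "(\<Sum>n<N. x n * uu N W w m r n) * cnj (\<Sum>n<N. x n * uu N W w m r n)
     = (\<Sum>i<N. cnj (uu N W w m r i) * cnj (x i)) * (\<Sum>j<N. uu N W w m r j * x j)"
    by (simp add: mult_ac)
  also have "\<dots> = (\<Sum>i<N. \<Sum>j<N. cnj (uu N W w m r i) * uu N W w m r j * (x j * cnj (x i)))"
    unfolding sum_product by (simp add: mult_ac)
  finally show ?thesis unfolding meas_closed Zw_closed by simp
qed

lemma exp_as_cis: "exp (- \<i> * 2 * pi * of_int m * of_nat j / of_nat N) = cis (- (2 * pi * of_int m * of_nat j / of_nat N))"
  unfolding cis_conv_exp by (simp add: field_simps)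

lemma coef:
  assumes r: "0 < r" and W: "2 \<le> W" and N: "0 < N"
  shows "cnj (uu N W w m r r) * uu N W w m r (r - 1) = cnj (w 0) * w 1 * cis (2 * pi * of_int m / of_nat N)"
proof -
  have w1: "wext W w (int r - int (r - 1)) = w 1" using r W by (simp add: wext_def of_nat_diff)
  have w0: "wext W w (int r - int r) = w 0" using W by (simp add: wext_def)
  have "cnj (uu N W w m r r) * uu N W w m r (r - 1) = cnj (w 0) * w 1 *
     (cis (2 * pi * of_int m * of_nat r / of_nat N) * cis (- (2 * pi * of_int m * of_nat (r - 1) / of_nat N)))"
    unfolding uu_def w1 w0 exp_as_cis by (simp add: cis_cnj mult_ac)
  also have "cis (2 * pi * of_int m * of_nat r / of_nat N) * cis (- (2 * pi * of_int m * of_nat (r - 1) / of_nat N))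
      = cis (2 * pi * of_int m / of_nat N)"
  proof -
    have "2 * pi * of_int m * of_nat r / of_nat N + - (2 * pi * of_int m * of_nat (r - 1) / of_nat N)
       = 2 * pi * of_int m / (of_nat N :: real)"
      using r N by (simp add: of_nat_diff field_simps)
    then show ?thesis unfolding cis_mult by simp
  qed
  finally show ?thesis .
qed

lemma Kne:
  fixes N :: nat
  assumes N: "2 < N"
  shows "Im ((cis (2 * (2 * pi / N)) - cis (2 * pi / N)) * cnj (cis (3 * (2 * pi / N)) - cis (2 * pi / N))) \<noteq> 0"
proof -
  define t where "t = 2 * pi / N"
  have t0: "0 < t" "t < pi" using N by (auto simp: t_def field_simps)
  have "(cis (2 * t) - cis t) * cnj (cis (3 * t) - cis t) = cis (- t) - cis t - cis (- (2*t)) + 1"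
    by (simp add: cis_cnj cis_mult algebra_simps)
  then have "Im ((cis (2 * t) - cis t) * cnj (cis (3 * t) - cis t)) = Im (cis (- t) - cis t - cis (- (2*t)) + 1)"
    by (simp only:)
  also have "\<dots> = - sin t - sin t + sin (2 * t)" by simp
  also have "\<dots> = 2 * sin t * (cos t - 1)" unfolding sin_double by (simp add: algebra_simps)
  finally have "Im ((cis (2 * t) - cis t) * cnj (cis (3 * t) - cis t)) = 2 * sin t * (cos t - 1)" .
  moreover have "sin t > 0" using t0 by (simp add: sin_gt_zero)
  moreover have "cos t < 1" using cos_monotone_0_pi[of 0 t] t0 by simp
  ultimately show ?thesis unfolding t_def by simp
qed




lemma hh_upd:
  fixes w x :: "nat \<Rightarrow> complex" and N W r :: nat
  assumes r: "0 < r"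
  shows "hh N W w (x(r - 1 := z)) m r = (cnj (uu N W w m r r) * uu N W w m r (r - 1)) * z + hh N W w (x(r - 1 := 0)) m r"
proof -
  obtain q where q: "r = Suc q" using r by (cases r) auto
  have s: "(\<Sum>j<q. uu N W w m r j * (x(q := y)) j) = (\<Sum>j<q. uu N W w m r j * x j)" for y
    by (intro sum.cong refl) auto
  show ?thesis unfolding hh_def q by (simp add: s algebra_simps)
qed

lemma gen_AE_pointwise:
  fixes w x :: "nat \<Rightarrow> complex" and W N r :: nat
  assumes r: "0 < r" and W: "2 \<le> W" and N: "2 < N" and wnz: "\<forall>n<W. w n \<noteq> 0"
  shows "AE z in lborel. gen N W w (x(r - 1 := z)) r"
proof -
  define k where "k = cnj (w 0) * w 1"
  define e where "e = (\<lambda>m::int. cis (2 * pi * of_int m / of_nat N))"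
  define b where "b = (\<lambda>m. hh N W w (x(r - 1 := 0)) m r)"
  have hz: "hh N W w (x(r - 1 := z)) m r = k * e m * z + b m" for m z
  proof -
    have Np: "0 < N" using N by simp
    show ?thesis
      by (subst hh_upd[OF r]) (simp only: coef[OF r W Np] b_def k_def e_def)
  qed
  have knz: "k \<noteq> 0" using wnz W unfolding k_def by auto
  have kk: "k * cnj k = of_real ((cmod k)^2)" by (rule complex_norm_square[symmetric])
  have e: "e 2 = cis (2 * (2 * pi / N))" "e 1 = cis (2 * pi / N)" "e 3 = cis (3 * (2 * pi / N))"
    unfolding e_def by (simp_all add: field_simps)
  have "Im ((k * e 2 - k * e 1) * cnj (k * e 3 - k * e 1)) = (cmod k)^2 * Im ((e 2 - e 1) * cnj (e 3 - e 1))"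
  proof -
    have "(k * e 2 - k * e 1) * cnj (k * e 3 - k * e 1) = (k * cnj k) * ((e 2 - e 1) * cnj (e 3 - e 1))"
      by (simp add: algebra_simps)
    then show ?thesis unfolding kk by simp
  qed
  moreover have "Im ((e 2 - e 1) * cnj (e 3 - e 1)) \<noteq> 0" unfolding e by (rule Kne[OF N])
  ultimately have K: "Im ((k * e 2 - k * e 1) * cnj (k * e 3 - k * e 1)) \<noteq> 0" using knz by simp
  show ?thesis
    using circle_AE[OF K, of "b 2 - b 1" "b 3 - b 1"]
  proof eventually_elim
    case (elim z)
    have "(hh N W w (x(r - 1 := z)) 2 r - hh N W w (x(r - 1 := z)) 1 r) = (k * e 2 - k * e 1) * z + (b 2 - b 1)"
      "(hh N W w (x(r - 1 := z)) 3 r - hh N W w (x(r - 1 := z)) 1 r) = (k * e 3 - k * e 1) * z + (b 3 - b 1)"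
      unfolding hz by (simp_all add: algebra_simps)
    then show ?case using elim unfolding gen_def by simp
  qed
qed

lemma gen_meas:
  fixes w :: "nat \<Rightarrow> complex" and N W r :: nat
  assumes "r \<le> N"
  shows "{x \<in> space (PiM {..<N} (\<lambda>_. lborel)). \<not> gen N W w x r} \<in> sets (PiM {..<N} (\<lambda>_. lborel :: complex measure))"
proof -
  have comp: "(\<lambda>x. x j) \<in> borel_measurable (PiM {..<N} (\<lambda>_. lborel :: complex measure))" if "j < r" for j
  proof -
    have "(\<lambda>x. x j) \<in> measurable (PiM {..<N} (\<lambda>_. lborel :: complex measure)) lborel"
      by (rule measurable_component_singleton) (use that assms in auto)
    then show ?thesis by simp
  qed
  have hm: "(\<lambda>x. hh N W w x m r) \<in> borel_measurable (PiM {..<N} (\<lambda>_. lborel :: complex measure))" for m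
    unfolding hh_def
    by (intro borel_measurable_times borel_measurable_const borel_measurable_sum comp) auto
  note hm[measurable]
  let ?g = "\<lambda>x. Im (hh N W w x 2 r - hh N W w x 1 r) * Re (hh N W w x 3 r - hh N W w x 1 r) - Re (hh N W w x 2 r - hh N W w x 1 r) * Im (hh N W w x 3 r - hh N W w x 1 r)"
  have g: "?g \<in> borel_measurable (PiM {..<N} (\<lambda>_. lborel :: complex measure))"
    by measurable
  have "{x \<in> space (PiM {..<N} (\<lambda>_. lborel)). \<not> gen N W w x r} = ?g -` {0} \<inter> space (PiM {..<N} (\<lambda>_. lborel :: complex measure))"
    by (auto simp: gen_def algebra_simps)
  also have "\<dots> \<in> sets (PiM {..<N} (\<lambda>_. lborel :: complex measure))"
    by (rule measurable_sets[OF g]) simp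
  finally show ?thesis .
qed




lemma psd_cong:
  assumes "\<And>i j. i < N \<Longrightarrow> j < N \<Longrightarrow> X i j = Y i j"
  shows "hermitian_psd N X = hermitian_psd N Y"
proof -
  have s: "(\<Sum>i<N. \<Sum>j<N. cnj (v i) * X i j * v j) = (\<Sum>i<N. \<Sum>j<N. cnj (v i) * Y i j * v j)" for v
    using assms by (intro sum.cong refl) auto
  show ?thesis unfolding hermitian_psd_def s using assms by auto
qed

lemma meas_cong:
  assumes "\<And>i j. i < N \<Longrightarrow> j < N \<Longrightarrow> X i j = Y i j"
  shows "meas_op N W w m r X = meas_op N W w m r Y"
  unfolding meas_closed using assms by (intro sum.cong refl) auto

theorem theorem3:
  fixes N W M :: nat and w :: "nat \<Rightarrow> complex"
  assumes "0 < N" and "0 < W" and "0 < M"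
    and "\<forall>n<W. w n \<noteq> 0"
    and "2 \<le> W" and "2 * W \<le> N"
    and "4 \<le> M" and "M \<le> N"
  shows "AE x0 in PiM {..<N} (\<lambda>_. (lborel :: complex measure)).
           (\<forall>n<N. x0 n \<noteq> 0) \<longrightarrow>
           (\<forall>X :: nat \<Rightarrow> nat \<Rightarrow> complex.
              (hermitian_psd N X \<and>
               (\<forall>m::int. \<forall>r::nat. 1 \<le> m \<and> m \<le> int M \<and> r < N + W - 1 \<longrightarrow>
                  meas_op N W w m r X = complex_of_real (Zw N W w x0 m r)))
              \<longleftrightarrow> (\<forall>i<N. \<forall>j<N. X i j = x0 i * cnj (x0 j)))"
proof -
  have N2: "2 < N" using assms by linarith
  have w0: "w 0 \<noteq> 0" using assms by auto
  have AEg: "AE x in PiM {..<N} (\<lambda>_. (lborel :: complex measure)). \<forall>r\<in>{1..<N}. gen N W w x r"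
  proof (rule AE_finite_allI)
    fix r assume r: "r \<in> {1..<N}"
    show "AE x in PiM {..<N} (\<lambda>_. (lborel :: complex measure)). gen N W w x r"
    proof (rule AE_PiM_coord[where j = "r - 1"])
      show "{x \<in> space (PiM {..<N} (\<lambda>_. lborel)). \<not> gen N W w x r} \<in> sets (PiM {..<N} (\<lambda>_. lborel :: complex measure))"
        by (rule gen_meas) (use r in auto)
      fix x :: "nat \<Rightarrow> complex"
      show "AE z in lborel. gen N W w (x(r - 1 := z)) r"
        by (rule gen_AE_pointwise) (use r assms N2 in auto)
    qed (use r in auto)
  qed simp
  then show ?thesis
  proof (rule eventually_mono)
    fix x0 :: "nat \<Rightarrow> complex" assume G: "\<forall>r\<in>{1..<N}. gen N W w x0 r"
    show "(\<forall>n<N. x0 n \<noteq> 0) \<longrightarrow>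
           (\<forall>X :: nat \<Rightarrow> nat \<Rightarrow> complex.
              (hermitian_psd N X \<and>
               (\<forall>m::int. \<forall>r::nat. 1 \<le> m \<and> m \<le> int M \<and> r < N + W - 1 \<longrightarrow>
                  meas_op N W w m r X = complex_of_real (Zw N W w x0 m r)))
              \<longleftrightarrow> (\<forall>i<N. \<forall>j<N. X i j = x0 i * cnj (x0 j)))"
    proof (intro impI allI)
      fix X :: "nat \<Rightarrow> nat \<Rightarrow> complex"
      assume nz: "\<forall>n<N. x0 n \<noteq> 0"
      show "(hermitian_psd N X \<and>
               (\<forall>m::int. \<forall>r::nat. 1 \<le> m \<and> m \<le> int M \<and> r < N + W - 1 \<longrightarrow>
                  meas_op N W w m r X = complex_of_real (Zw N W w x0 m r)))
              \<longleftrightarrow> (\<forall>i<N. \<forall>j<N. X i j = x0 i * cnj (x0 j))"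
      proof
        assume A: "hermitian_psd N X \<and>
               (\<forall>m::int. \<forall>r::nat. 1 \<le> m \<and> m \<le> int M \<and> r < N + W - 1 \<longrightarrow>
                  meas_op N W w m r X = complex_of_real (Zw N W w x0 m r))"
        have meas: "\<And>m r. 1 \<le> m \<Longrightarrow> m \<le> 3 \<Longrightarrow> r < N \<Longrightarrow> meas_op N W w m r X = complex_of_real (Zw N W w x0 m r)"
          using A assms by auto
        show "\<forall>i<N. \<forall>j<N. X i j = x0 i * cnj (x0 j)"
          by (rule pointwise[OF conjunct1[OF A] \<open>0 < W\<close> w0 _ _ meas]) (use nz assms G in auto)
      next
        assume B: "\<forall>i<N. \<forall>j<N. X i j = x0 i * cnj (x0 j)"
        have psd: "hermitian_psd N X"
          using psd_cong[of N X "\<lambda>i j. x0 i * cnj (x0 j)"] B conv_psd by auto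
        show "hermitian_psd N X \<and>
               (\<forall>m::int. \<forall>r::nat. 1 \<le> m \<and> m \<le> int M \<and> r < N + W - 1 \<longrightarrow>
                  meas_op N W w m r X = complex_of_real (Zw N W w x0 m r))"
          using psd meas_cong[of N X "\<lambda>i j. x0 i * cnj (x0 j)"] B conv_meas by auto
      qed
    qed
  qed
qed


end
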